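(* Let $f\in C^1[0,1]$ with $f(0)=0$, $h:=f'$, and $q$ satisfying (q). For every $c\in\mathbb R$ the problem: $\zeta\in C[0,1]\cap C^1(0,1)$, $\dot\zeta(\varphi)=h(\varphi)-c-q(\varphi)/\zeta(\varphi)$ and $\zeta(\varphi)<0$ for $\varphi\in(0,1)$, $\zeta(1)=0$, admits a unique solution $\zeta_c$. If $c\ge c^*$ then $\zeta_c(0)=0$, and if $c<c^*$ then $\zeta_c(0)<0$. Moreover: (i) if $c_2>c_1$ then $\zeta_{c_2}>\zeta_{c_1}$ on $(0,1)$; (ii) $z^*(\varphi)=\lim_{c\to c^*}\zeta_c(\varphi)$ for every $\varphi\in[0,1]$.
   Context: Condition (q): $q\in C[0,1]$, $q>0$ on $(0,1)$, $q(0)=q(1)=0$, and $\limsup_{\varphi\to0^+}q(\varphi)/\varphi<+\infty$. $c^*$ denotes the real number such that there exists $z\in C[0,1]\cap C^1(0,1)$ with $\dot z=h-c-q/z$ and $z<0$ on $(0,1)$, and $z(0)=z(1)=0$, if and only if $c\ge c^*$ (such $z$ then being unique); $z^*$ denotes this unique function for $c=c^*$. *)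

theory Defs
  imports "HOL-Analysis.Analysis" "HOL-Library.Liminf_Limsup"
begin

definition cond_q :: "(real \<Rightarrow> real) \<Rightarrow> bool" where
  "cond_q q \<longleftrightarrow> continuous_on {0..1} q \<and> (\<forall>x\<in>{0<..<1}. q x > 0) \<and> q 0 = 0 \<and> q 1 = 0
     \<and> Limsup (at_right 0) (\<lambda>x. ereal (q x / x)) < \<infinity>"

definition is_sol :: "(real \<Rightarrow> real) \<Rightarrow> (real \<Rightarrow> real) \<Rightarrow> real \<Rightarrow> (real \<Rightarrow> real) \<Rightarrow> bool" where
  "is_sol h q c z \<longleftrightarrow> continuous_on {0..1} z
     \<and> (\<forall>x\<in>{0<..<1}. (z has_real_derivative (h x - c - q x / z x)) (at x))
     \<and> continuous_on {0<..<1} (deriv z)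
     \<and> (\<forall>x\<in>{0<..<1}. z x < 0) \<and> z 1 = 0"

definition is_sol0 :: "(real \<Rightarrow> real) \<Rightarrow> (real \<Rightarrow> real) \<Rightarrow> real \<Rightarrow> (real \<Rightarrow> real) \<Rightarrow> bool" where
  "is_sol0 h q c z \<longleftrightarrow> is_sol h q c z \<and> z 0 = 0"

end

theory Submission
  imports Defs
begin


lemma sol_of_int:
  fixes G z :: "real \<Rightarrow> real"
  assumes G: "G integrable_on {0..1}" and z: "\<forall>x\<in>{0..1}. z x = - integral {x..1} G"
  shows "continuous_on {0..1} z" "z 1 = 0"
    "\<And>x. x \<in> {0<..<1} \<Longrightarrow> isCont G x \<Longrightarrow> (z has_real_derivative G x) (at x)"
proof -
  have "continuous_on {0..1} (\<lambda>x. - integral {x..1} G)"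
    using indefinite_integral_continuous_1'[OF G] by (intro continuous_intros)
  then show "continuous_on {0..1} z" using continuous_on_cong z by (smt (verit))
  show "z 1 = 0" using z by simp
  fix x :: real assume x: "x \<in> {0<..<1}" and c: "isCont G x"
  have "((\<lambda>u. integral {0..u} G) has_vector_derivative G x) (at x within ({0..1} - {}))"
    using x c by (intro integral_has_vector_derivative_continuous_at[OF G]) (auto simp: isCont_def continuous_at_imp_continuous_at_within)
  moreover have "at x within ({0..1} - {}) = at x"
    using x by (intro at_within_interior) auto
  ultimately have d: "((\<lambda>u. integral {0..u} G) has_real_derivative G x) (at x)"
    by (simp add: has_real_derivative_iff_has_vector_derivative)
  have d2: "((\<lambda>u. integral {0..u} G - integral {0..1} G) has_real_derivative G x) (at x)"
    using d by (auto intro!: derivative_eq_intros)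
  show "(z has_real_derivative G x) (at x)"
  proof (rule has_field_derivative_transform_within_open[OF d2, of "{0<..<1}"])
    fix y :: real assume y: "y \<in> {0<..<1}"
    have "integral {0..y} G + integral {y..1} G = integral {0..1} G"
      using y by (intro Henstock_Kurzweil_Integration.integral_combine[OF _ _ G]) auto
    then show "integral {0..y} G - integral {0..1} G = z y" using z y by auto
  qed (use x in auto)
qed

lemma int_of_sol:
  fixes G z :: "real \<Rightarrow> real"
  assumes z: "continuous_on {0..1} z" and d: "\<And>x. x \<in> {0<..<1} \<Longrightarrow> (z has_real_derivative G x) (at x)"
    and x: "x \<in> {0..1}"
  shows "(G has_integral (z 1 - z x)) {x..1}"
proof (rule fundamental_theorem_of_calculus_interior)
  show "x \<le> 1" using x by auto
  show "continuous_on {x..1} z" by (rule continuous_on_subset[OF z]) (use x in auto)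
  fix y assume "y \<in> {x<..<1}"
  then show "(z has_vector_derivative G y) (at y)"
    using d x by (auto simp: has_real_derivative_iff_has_vector_derivative)
qed

lemma cmp:
  fixes D :: "real \<Rightarrow> real"
  assumes D: "continuous_on {0..1} D" and D1: "D 1 \<le> 0"
    and d: "\<forall>x\<in>{0<..<1}. \<exists>d. (D has_real_derivative d) (at x) \<and> (D x > 0 \<longrightarrow> d \<ge> 0)"
  shows "\<forall>x\<in>{0<..<1}. D x \<le> 0"
proof (rule ccontr)
  assume "\<not> ?thesis"
  then obtain x0 where x0: "x0 \<in> {0<..<1}" "D x0 > 0" by force
  define S where "S = {x0..1} \<inter> D -` {..0}"
  have "closed S"
  proof -
    have "continuous_on {x0..1} D" by (rule continuous_on_subset[OF D]) (use x0 in auto)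
    then have "closedin (top_of_set {x0..1}) ({x0..1} \<inter> D -` {..0})"
      by (intro continuous_closedin_preimage) auto
    then show ?thesis unfolding S_def using closedin_closed_trans by blast
  qed
  have "1 \<in> S" using D1 x0 by (auto simp: S_def)
  have bdd: "bdd_below S" unfolding S_def by (rule bdd_belowI[of _ x0]) auto
  define x1 where "x1 = Inf S"
  have "x1 \<in> S" unfolding x1_def using closed_contains_Inf[OF _ bdd \<open>closed S\<close>] \<open>1\<in>S\<close> by auto
  then have x1: "x0 \<le> x1" "x1 \<le> 1" "D x1 \<le> 0" by (auto simp: S_def)
  have x01: "x0 < x1" using x1 x0 by (cases "x0 = x1") auto
  have pos: "D y > 0" if "x0 \<le> y" "y < x1" for y
  proof (rule ccontr)
    assume "\<not> D y > 0"
    then have "y \<in> S" using that x1 by (auto simp: S_def)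
    then have "x1 \<le> y" unfolding x1_def by (rule cInf_lower[OF _ bdd])
    then show False using that by auto
  qed
  have "\<exists>l z. x0 < z \<and> z < x1 \<and> DERIV D z :> l \<and> D x1 - D x0 = (x1 - x0) * l"
  proof (rule MVT[OF x01])
    show "continuous_on {x0..x1} D" by (rule continuous_on_subset[OF D]) (use x0 x1 in auto)
    fix y assume "x0 < y" "y < x1"
    then show "D differentiable (at y)" using d x0 x1 by (auto simp: real_differentiable_def)
  qed
  then obtain l z where z: "x0 < z" "z < x1" "DERIV D z :> l" "D x1 - D x0 = (x1 - x0) * l" by blast
  have "z \<in> {0<..<1}" using z x0 x1 by auto
  then obtain d' where "DERIV D z :> d'" "D z > 0 \<longrightarrow> d' \<ge> 0" using d by blast
  then have "l \<ge> 0" using z pos[of z] DERIV_unique by fastforce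
  then have "D x1 \<ge> D x0" using z x01 by (smt (verit) mult_nonneg_nonneg)
  then show False using x1 x0 by auto
qed




lemma pow_int:
  fixes x :: real and m :: nat
  assumes "x \<le> 1"
  shows "((\<lambda>s. (1 - s)^m) has_integral (1 - x)^(Suc m) / Suc m) {x..1}"
proof -
  define f where "f s = -((1 - s)^(Suc m)) / real (Suc m)" for s :: real
  have d: "(f has_vector_derivative (1 - s)^m) (at s within {x..1})" for s
    unfolding has_real_derivative_iff_has_vector_derivative[symmetric] f_def
    by (rule derivative_eq_intros refl | simp)+
  have "((\<lambda>s. (1 - s)^m) has_integral (f 1 - f x)) {x..1}"
    by (rule fundamental_theorem_of_calculus[OF assms d])
  then show ?thesis by (simp add: f_def)
qed

lemma picard:
  fixes F :: "real \<Rightarrow> real \<Rightarrow> real"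
  assumes L: "L \<ge> 0" and B: "B \<ge> 0"
  and lip: "\<forall>x\<in>{0..1}. \<forall>y1 y2. \<bar>F x y1 - F x y2\<bar> \<le> L * \<bar>y1 - y2\<bar>"
  and bnd: "\<forall>x\<in>{0..1}. \<forall>y. \<bar>F x y\<bar> \<le> B"
  and cont: "\<forall>y. continuous_on {0..1} y \<longrightarrow> continuous_on {0..1} (\<lambda>s. F s (y s))"
  shows "\<exists>y. continuous_on {0..1} y \<and> (\<forall>x\<in>{0..1}. y x = - integral {x..1} (\<lambda>s. F s (y s)))"
proof -
  define P where "P = rec_nat (\<lambda>x. 0) (\<lambda>n p. \<lambda>x. - integral {x..1} (\<lambda>s. F s (p s)))"
  have P0: "P 0 = (\<lambda>x. 0)" and PS: "\<And>n. P (Suc n) = (\<lambda>x. - integral {x..1} (\<lambda>s. F s (P n s)))"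
    by (simp_all add: P_def)
  have Pc: "continuous_on {0..1} (P n)" for n
  proof (induction n)
    case 0 then show ?case by (simp add: P0)
  next
    case (Suc n)
    have "(\<lambda>s. F s (P n s)) integrable_on {0..1}"
      using cont Suc by (intro integrable_continuous_interval) auto
    then show ?case unfolding PS
      using indefinite_integral_continuous_1' by (intro continuous_intros) auto
  qed
  have Pint: "(\<lambda>s. F s (P n s)) integrable_on {x..1}" if "x \<in> {0..1}" for n x
    proof -
    have cc: "continuous_on {0..1} (\<lambda>s. F s (P n s))" using cont Pc by auto
    show ?thesis using that by (intro integrable_continuous_interval continuous_on_subset[OF cc]) auto
  qed
  have est: "\<bar>P (Suc n) x - P n x\<bar> \<le> B * L^n * (1 - x)^(Suc n) / fact (Suc n)" if "x \<in> {0..1}" for n x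
    using that
  proof (induction n arbitrary: x)
    case 0
    have "norm (integral {x..1} (\<lambda>s. F s 0)) \<le> integral {x..1} (\<lambda>s. B)"
      using 0 Pint[of x 0] bnd by (intro integral_norm_bound_integral) (auto simp: P0)
    then show ?case using 0 by (simp add: PS P0 mult.commute)
  next
    case (Suc n)
    have "\<bar>P (Suc (Suc n)) x - P (Suc n) x\<bar> =
          norm (integral {x..1} (\<lambda>s. F s (P (Suc n) s) - F s (P n s)))"
    proof -
      have a: "P (Suc (Suc n)) x = - integral {x..1} (\<lambda>s. F s (P (Suc n) s))" by (simp only: PS[of "Suc n"])
      have b: "P (Suc n) x = - integral {x..1} (\<lambda>s. F s (P n s))" by (simp only: PS[of n])
      show ?thesis unfolding a b using Suc.prems Pint[of x n] Pint[of x "Suc n"]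
        by (simp add: integral_diff)
    qed
    also have "\<dots> \<le> integral {x..1} (\<lambda>s. (L * (B * L^n / fact (Suc n))) * (1 - s)^(Suc n))"
    proof (rule integral_norm_bound_integral)
      show "(\<lambda>s. F s (P (Suc n) s) - F s (P n s)) integrable_on {x..1}"
        using Suc.prems Pint by (intro integrable_diff) auto
      show "(\<lambda>s. (L * (B * L^n / fact (Suc n))) * (1 - s)^(Suc n)) integrable_on {x..1}"
      proof -
        have "(\<lambda>s. (1 - s)^(Suc n)) integrable_on {x..1}" using pow_int[of x "Suc n"] Suc.prems by auto
        from integrable_cmul[OF this, of "L * (B * L ^ n / fact (Suc n))"] show ?thesis by simp
      qed
      fix s assume s: "s \<in> {x..1}"
      then have s01: "s \<in> {0..1}" using Suc.prems by auto
      have "norm (F s (P (Suc n) s) - F s (P n s)) \<le> L * \<bar>P (Suc n) s - P n s\<bar>"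
        using lip s01 by auto
      also have "\<dots> \<le> L * (B * L^n * (1 - s)^(Suc n) / fact (Suc n))"
        using Suc.IH[OF s01] L by (intro mult_left_mono) auto
      finally show "norm (F s (P (Suc n) s) - F s (P n s)) \<le> (L * (B * L^n / fact (Suc n))) * (1 - s)^(Suc n)"
        by (simp add: field_simps)
    qed
    also have "\<dots> = (L * (B * L^n / fact (Suc n))) * ((1 - x)^(Suc (Suc n)) / Suc (Suc n))"
      using pow_int[of x "Suc n"] Suc.prems by (simp add: integral_mult_right integral_unique)
    also have "\<dots> = B * L^(Suc n) * (1 - x)^(Suc (Suc n)) / fact (Suc (Suc n))"
      by (simp add: field_simps)
    finally show ?case .
  qed
  have est2: "norm (P (Suc n) x - P n x) \<le> B * (inverse (fact n) * L^n)" if "x \<in> {0..1}" for n x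
  proof -
    have "(1 - x)^(Suc n) \<le> 1" using that by (intro power_le_one) auto
    moreover have "fact n \<le> (fact (Suc n) :: real)" by (rule fact_mono) auto
    ultimately have "B * L^n * (1 - x)^(Suc n) / fact (Suc n) \<le> B * L^n * 1 / fact n"
      using B L by (intro frac_le mult_left_mono) auto
    moreover have "B * L^n * 1 / fact n = B * (inverse (fact n) * L^n)" by (simp add: field_simps)
    ultimately show ?thesis using est[OF that, of n] by (metis real_norm_def order_trans)
  qed
  have conv: "convergent (\<lambda>n. P n x)" if "x \<in> {0..1}" for x
  proof -
    have "summable (\<lambda>n. P (Suc n) x - P n x)"
      by (rule summable_comparison_test[OF _ summable_mult[OF summable_exp]]) (use est2 that in auto)
    then have "(\<lambda>m. \<Sum>n<m. P (Suc n) x - P n x) \<longlonglongrightarrow> suminf (\<lambda>n. P (Suc n) x - P n x)"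
      by (rule summable_LIMSEQ)
    then have "(\<lambda>m. P m x - P 0 x) \<longlonglongrightarrow> suminf (\<lambda>n. P (Suc n) x - P n x)"
      by (simp only: sum_lessThan_telescope[of "\<lambda>n. P n x"])
    then have "(\<lambda>m. P m x - P 0 x + P 0 x) \<longlonglongrightarrow> suminf (\<lambda>n. P (Suc n) x - P n x) + P 0 x"
      by (intro tendsto_add) auto
    then show ?thesis by (auto simp: convergent_def)
  qed
  define y where "y x = lim (\<lambda>n. P n x)" for x
  have ylim: "(\<lambda>n. P n x) \<longlonglongrightarrow> y x" if "x \<in> {0..1}" for x
    using conv[OF that] by (simp add: y_def convergent_LIMSEQ_iff)
  have Fconv: "(\<lambda>n. F s (P n s)) \<longlonglongrightarrow> F s (y s)" if "s \<in> {0..1}" for s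
  proof -
    have "(\<lambda>n. L * \<bar>P n s - y s\<bar>) \<longlonglongrightarrow> L * \<bar>y s - y s\<bar>"
      using ylim[OF that] by (intro tendsto_intros)
    then have l0: "(\<lambda>n. L * \<bar>P n s - y s\<bar>) \<longlonglongrightarrow> 0" by simp
    have "(\<lambda>n. F s (P n s) - F s (y s)) \<longlonglongrightarrow> 0"
    proof (rule Lim_null_comparison[of _ "\<lambda>n. L * \<bar>P n s - y s\<bar>"])
      show "\<forall>\<^sub>F n in sequentially. norm (F s (P n s) - F s (y s)) \<le> L * \<bar>P n s - y s\<bar>"
        using lip that by (intro always_eventually allI) simp
    qed (rule l0)
    then show ?thesis by (simp add: LIM_zero_iff)
  qed
  have main: "(\<lambda>s. F s (y s)) integrable_on {x..1} \<and> y x = - integral {x..1} (\<lambda>s. F s (y s))"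
    if x: "x \<in> {0..1}" for x
  proof -
    have dc: "(\<lambda>s. F s (y s)) integrable_on {x..1}"
         "(\<lambda>n. integral {x..1} (\<lambda>s. F s (P n s))) \<longlonglongrightarrow> integral {x..1} (\<lambda>s. F s (y s))"
    proof -
      have i: "\<And>n. (\<lambda>s. F s (P n s)) integrable_on {x..1}" using Pint x by auto
      have h: "(\<lambda>s. B) integrable_on {x..1}" by (rule integrable_const_ivl)
      have le: "\<And>n s. s \<in> {x..1} \<Longrightarrow> norm (F s (P n s)) \<le> B" using bnd x by auto
      have cv: "\<And>s. s \<in> {x..1} \<Longrightarrow> (\<lambda>n. F s (P n s)) \<longlonglongrightarrow> F s (y s)" using Fconv x by auto
      show "(\<lambda>s. F s (y s)) integrable_on {x..1}"
           "(\<lambda>n. integral {x..1} (\<lambda>s. F s (P n s))) \<longlonglongrightarrow> integral {x..1} (\<lambda>s. F s (y s))"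
        using dominated_convergence[OF i h le cv] by auto
    qed
    have "(\<lambda>n. P (Suc n) x) \<longlonglongrightarrow> - integral {x..1} (\<lambda>s. F s (y s))"
      unfolding PS using dc(2) by (intro tendsto_intros)
    moreover have "(\<lambda>n. P (Suc n) x) \<longlonglongrightarrow> y x" using ylim[OF x] by (rule LIMSEQ_Suc)
    ultimately show ?thesis using dc(1) LIMSEQ_unique by blast
  qed
  have "continuous_on {0..1} y"
  proof (rule sol_of_int(1))
    show "(\<lambda>s. F s (y s)) integrable_on {0..1}" using main[of 0] by simp
    show "\<forall>x\<in>{0..1}. y x = - integral {x..1} (\<lambda>s. F s (y s))" using main by blast
  qed
  then show ?thesis using main by blast
qed




lemma div_mono_neg: "(q::real) \<ge> 0 \<Longrightarrow> m \<le> m' \<Longrightarrow> m' < 0 \<Longrightarrow> - (q / m) \<le> - (q / m')"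
  by (simp add: field_simps mult_right_mono)

lemma abs_div_le: "(q::real) \<ge> 0 \<Longrightarrow> m \<le> z \<Longrightarrow> z < 0 \<Longrightarrow> \<bar>q / m\<bar> \<le> \<bar>q / z\<bar>"
proof -
  assume a: "q \<ge> 0" "m \<le> z" "z < 0"
  have "\<bar>q / m\<bar> = q / \<bar>m\<bar>" "\<bar>q / z\<bar> = q / \<bar>z\<bar>" using a by (auto simp: abs_divide)
  moreover have "q / \<bar>m\<bar> \<le> q / \<bar>z\<bar>" using a by (intro divide_left_mono) (auto intro: mult_pos_pos simp: mult_neg_neg)
  ultimately show ?thesis by linarith
qed

lemma lip_aux:
  fixes a m1 m2 d Q :: real
  assumes "m1 \<le> -d" "m2 \<le> -d" "d > 0" "\<bar>a\<bar> \<le> Q"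
  shows "\<bar>a / m1 - a / m2\<bar> \<le> Q / d^2 * \<bar>m1 - m2\<bar>"
proof -
  have ne: "m1 \<noteq> 0" "m2 \<noteq> 0" using assms by auto
  have "a / m1 - a / m2 = a * (m2 - m1) / (m1 * m2)" using ne by (simp add: field_simps)
  then have "\<bar>a / m1 - a / m2\<bar> = \<bar>a\<bar> * \<bar>m1 - m2\<bar> / (\<bar>m1\<bar> * \<bar>m2\<bar>)"
    by (simp add: abs_mult abs_minus_commute)
  also have "\<dots> \<le> Q * \<bar>m1 - m2\<bar> / (d * d)"
  proof (rule frac_le)
    show "0 \<le> Q * \<bar>m1 - m2\<bar>" using assms by (intro mult_nonneg_nonneg) auto
    show "\<bar>a\<bar> * \<bar>m1 - m2\<bar> \<le> Q * \<bar>m1 - m2\<bar>" using assms by (intro mult_right_mono) auto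
    show "0 < d * d" using assms by auto
    show "d * d \<le> \<bar>m1\<bar> * \<bar>m2\<bar>" using assms by (intro mult_mono) auto
  qed
  finally show ?thesis by (simp add: power2_eq_square)
qed

lemma sol_int:
  assumes z: "is_sol h q c z" and x: "x \<in> {0..1}"
  shows "((\<lambda>s. h s - c - q s / z s) has_integral - z x) {x..1}"
proof -
  have "((\<lambda>s. h s - c - q s / z s) has_integral (z 1 - z x)) {x..1}"
    using z x by (intro int_of_sol) (auto simp: is_sol_def)
  then show ?thesis using z by (simp add: is_sol_def)
qed




lemma exist_below:
  fixes h q zs :: "real \<Rightarrow> real" and c cs :: real
  assumes hc: "continuous_on {0..1} h" and q: "cond_q q" and zs: "is_sol h q cs zs" and c: "c < cs"
  shows "\<exists>z. is_sol h q c z"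
proof -
  have qc: "continuous_on {0..1} q" and qpos: "\<And>x. x \<in> {0<..<1} \<Longrightarrow> q x > 0"
    and q0: "q 0 = 0" and q1: "q 1 = 0" using q by (auto simp: cond_q_def)
  have qnn: "q x \<ge> 0" if "x \<in> {0..1}" for x
    using that qpos[of x] q0 q1 by (cases "x = 0 \<or> x = 1") (auto simp: less_le)
  have zsc: "continuous_on {0..1} zs" and zsneg: "\<And>x. x \<in> {0<..<1} \<Longrightarrow> zs x < 0"
    and zs1: "zs 1 = 0"
    and zsd: "\<And>x. x \<in> {0<..<1} \<Longrightarrow> (zs has_real_derivative (h x - cs - q x / zs x)) (at x)"
    using zs by (auto simp: is_sol_def)
  define Gs where "Gs s = h s - cs - q s / zs s" for s
  have Gsi: "(Gs has_integral - zs x) {x..1}" if "x \<in> {0..1}" for x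
    unfolding Gs_def by (rule sol_int[OF zs that])
  define g where "g s = h s - c" for s
  have gc: "continuous_on {0..1} g" unfolding g_def using hc by (intro continuous_intros)
  obtain Q where Q: "\<forall>x\<in>{0..1}. norm (q x) \<le> Q"
    using compact_imp_bounded[OF compact_continuous_image[OF qc compact_Icc]] by (auto simp: bounded_iff)
  obtain Hb where Hb: "\<forall>x\<in>{0..1}. norm (g x) \<le> Hb"
    using compact_imp_bounded[OF compact_continuous_image[OF gc compact_Icc]] by (auto simp: bounded_iff)
  have Q0: "Q \<ge> 0" using Q by (metis atLeastAtMost_iff norm_ge_zero order_trans zero_le_one order_refl)
  have Hb0: "Hb \<ge> 0" using Hb by (metis atLeastAtMost_iff norm_ge_zero order_trans zero_le_one order_refl)
  define \<delta> where "\<delta> n = 1 / real (Suc n)" for n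
  have \<delta>pos: "\<delta> n > 0" for n by (simp add: \<delta>_def)
  have \<delta>mono: "\<delta> (Suc n) \<le> \<delta> n" for n by (simp add: \<delta>_def frac_le)
  have \<delta>lim: "\<delta> \<longlonglongrightarrow> 0" unfolding \<delta>_def using LIMSEQ_inverse_real_of_nat by (simp add: inverse_eq_divide)
  define k where "k n s = min (zs s) (- \<delta> n)" for n s
  define F where "F n s y = g s - q s / min y (k n s)" for n s y
  have kle: "min y (k n s) \<le> - \<delta> n" for n s y by (simp add: k_def)
  have exw: "\<exists>w. continuous_on {0..1} w \<and> (\<forall>x\<in>{0..1}. w x = - integral {x..1} (\<lambda>s. F n s (w s)))" for n
  proof (rule picard)
    show "Q / (\<delta> n)^2 \<ge> 0" using Q0 by simp
    show "Hb + Q / \<delta> n \<ge> 0" using Q0 Hb0 \<delta>pos[of n] by simp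
    show "\<forall>x\<in>{0..1}. \<forall>y1 y2. \<bar>F n x y1 - F n x y2\<bar> \<le> Q / (\<delta> n)^2 * \<bar>y1 - y2\<bar>"
    proof (intro ballI allI)
      fix x y1 y2 :: real assume x: "x \<in> {0..1}"
      have "\<bar>F n x y1 - F n x y2\<bar> = \<bar>q x / min y1 (k n x) - q x / min y2 (k n x)\<bar>"
        by (simp add: F_def abs_minus_commute)
      also have "\<dots> \<le> Q / (\<delta> n)^2 * \<bar>min y1 (k n x) - min y2 (k n x)\<bar>"
        using kle \<delta>pos Q x by (intro lip_aux) auto
      also have "\<dots> \<le> Q / (\<delta> n)^2 * \<bar>y1 - y2\<bar>"
        using Q0 by (intro mult_left_mono) (auto simp: min_def)
      finally show "\<bar>F n x y1 - F n x y2\<bar> \<le> Q / (\<delta> n)^2 * \<bar>y1 - y2\<bar>" .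
    qed
    show "\<forall>x\<in>{0..1}. \<forall>y. \<bar>F n x y\<bar> \<le> Hb + Q / \<delta> n"
    proof (intro ballI allI)
      fix x y :: real assume x: "x \<in> {0..1}"
      have "\<bar>q x / min y (k n x)\<bar> \<le> Q / \<delta> n"
      proof -
        have "\<bar>q x / min y (k n x)\<bar> = \<bar>q x\<bar> / \<bar>min y (k n x)\<bar>" by (simp add: abs_divide)
        also have "\<dots> \<le> Q / \<delta> n"
          using Q x kle[of y n x] \<delta>pos[of n] by (intro frac_le) auto
        finally show ?thesis .
      qed
      then show "\<bar>F n x y\<bar> \<le> Hb + Q / \<delta> n" using Hb x unfolding F_def by (smt (verit) real_norm_def)
    qed
    show "\<forall>y. continuous_on {0..1} y \<longrightarrow> continuous_on {0..1} (\<lambda>s. F n s (y s))"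
    proof (intro allI impI)
      fix y :: "real \<Rightarrow> real" assume "continuous_on {0..1} y"
      then show "continuous_on {0..1} (\<lambda>s. F n s (y s))"
      proof -
        have kc: "continuous_on {0..1} (k n)" unfolding k_def using zsc by (intro continuous_intros)
        have nz: "\<forall>s\<in>{0..1}. min (y s) (k n s) \<noteq> 0" proof
          fix s :: real show "min (y s) (k n s) \<noteq> 0" using kle[of "y s" n s] \<delta>pos[of n] by linarith
        qed
        show ?thesis unfolding F_def using gc qc kc nz \<open>continuous_on {0..1} y\<close>
          by (intro continuous_intros) auto
      qed
    qed
  qed
  then obtain w where wc: "\<And>n. continuous_on {0..1} (w n)"
    and weq: "\<And>n x. x \<in> {0..1} \<Longrightarrow> w n x = - integral {x..1} (\<lambda>s. F n s (w n s))"
    by metis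
  have Fc: "continuous_on {0..1} (\<lambda>s. F n s (w n s))" for n
  proof -
    have kc: "continuous_on {0..1} (k n)" unfolding k_def using zsc by (intro continuous_intros)
    have nz: "\<forall>s\<in>{0..1}. min (w n s) (k n s) \<noteq> 0"
    proof
      fix s :: real show "min (w n s) (k n s) \<noteq> 0" using kle[of "w n s" n s] \<delta>pos[of n] by linarith
    qed
    show ?thesis unfolding F_def using gc qc kc nz wc[of n]
      by (intro continuous_intros) auto
  qed
  have Fi: "(\<lambda>s. F n s (w n s)) integrable_on {x..1}" if "x \<in> {0..1}" for n x
    using that by (intro integrable_continuous_interval continuous_on_subset[OF Fc]) auto
  have wd: "(w n has_real_derivative F n x (w n x)) (at x)" if "x \<in> {0<..<1}" for n x
  proof (rule sol_of_int(3)[of "\<lambda>s. F n s (w n s)"])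
    show "(\<lambda>s. F n s (w n s)) integrable_on {0..1}" using Fi[of 0] by simp
    show "\<forall>x\<in>{0..1}. w n x = - integral {x..1} (\<lambda>s. F n s (w n s))" using weq by blast
    show "x \<in> {0<..<1}" by fact
    show "isCont (\<lambda>s. F n s (w n s)) x"
      using continuous_on_interior[OF Fc] that by (simp add: interior_atLeastAtMost_real)
  qed
  have w1: "w n 1 = 0" for n using weq[of 1 n] by simp
  have wdec: "w (Suc n) x \<le> w n x" if "x \<in> {0<..<1}" for n x
  proof -
    have "\<forall>x\<in>{0<..<1}. (\<lambda>x. w (Suc n) x - w n x) x \<le> 0"
    proof (rule cmp)
      show "continuous_on {0..1} (\<lambda>x. w (Suc n) x - w n x)" using wc by (intro continuous_intros)
      show "w (Suc n) 1 - w n 1 \<le> 0" by (simp add: w1)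
      show "\<forall>x\<in>{0<..<1}. \<exists>d. ((\<lambda>x. w (Suc n) x - w n x) has_real_derivative d) (at x) \<and>
              ((\<lambda>x. w (Suc n) x - w n x) x > 0 \<longrightarrow> d \<ge> 0)"
      proof
        fix x :: real assume x: "x \<in> {0<..<1}"
        have "min (w n x) (k n x) \<le> min (w (Suc n) x) (k (Suc n) x)"
          if "w (Suc n) x - w n x > 0" using that \<delta>mono[of n] by (auto simp: k_def min_def)
        moreover have "min (w (Suc n) x) (k (Suc n) x) < 0" using kle[of "w (Suc n) x" "Suc n" x] \<delta>pos[of "Suc n"] by linarith
        ultimately have "w (Suc n) x - w n x > 0 \<longrightarrow> F (Suc n) x (w (Suc n) x) - F n x (w n x) \<ge> 0"
          using div_mono_neg[of "q x"] qnn[of x] x unfolding F_def by force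
        then show "\<exists>d. ((\<lambda>x. w (Suc n) x - w n x) has_real_derivative d) (at x) \<and>
              ((\<lambda>x. w (Suc n) x - w n x) x > 0 \<longrightarrow> d \<ge> 0)"
          using DERIV_diff[OF wd[OF x, of "Suc n"] wd[OF x, of n]] by auto
      qed
    qed
    then show ?thesis using that by auto
  qed
  define u where "u x = zs x - (cs - c) * (1 - x)" for x
  have Fle: "F n s y \<le> Gs s + (cs - c)" if "s \<in> {0..1}" for n s y
  proof (cases "s \<in> {0<..<1}")
    case True
    have "min y (k n s) \<le> zs s" by (simp add: k_def)
    then have "- (q s / min y (k n s)) \<le> - (q s / zs s)"
      using div_mono_neg[of "q s"] qnn that zsneg[OF True] by blast
    then show ?thesis by (simp add: F_def Gs_def g_def)
  next
    case False
    then have "s = 0 \<or> s = 1" using that by auto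
    then show ?thesis by (auto simp: F_def Gs_def g_def q0 q1)
  qed
  have wlow: "w n x \<ge> u x" if "x \<in> {0..1}" for n x
  proof -
    have i2: "((\<lambda>s. Gs s + (cs - c)) has_integral (- zs x + (cs - c) * (1 - x))) {x..1}"
      using has_integral_add[OF Gsi[OF that] has_integral_const_real[of "cs - c" x 1]] that by (simp add: mult.commute)
    have "integral {x..1} (\<lambda>s. F n s (w n s)) \<le> integral {x..1} (\<lambda>s. Gs s + (cs - c))"
      using Fi[OF that] i2 Fle that by (intro integral_le) auto
    then show ?thesis using weq[OF that] i2 by (simp add: u_def integral_unique)
  qed
  define \<zeta> where "\<zeta> x = lim (\<lambda>n. w n x)" for x
  have wlim_in: "(\<lambda>n. w n s) \<longlonglongrightarrow> \<zeta> s" if s: "s \<in> {0<..<1}" for s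
  proof -
    have "decseq (\<lambda>n. w n s)" using wdec[OF s] by (simp add: decseq_Suc_iff)
    moreover have "bdd_below (range (\<lambda>n. w n s))" using wlow[of s] s by (intro bdd_belowI[of _ "u s"]) auto
    ultimately have "convergent (\<lambda>n. w n s)" using LIMSEQ_decseq_INF convergent_def by blast
    then show ?thesis by (simp add: \<zeta>_def convergent_LIMSEQ_iff)
  qed
  define Gt where "Gt s = g s - q s / min (\<zeta> s) (zs s)" for s
  have Fconv: "(\<lambda>n. F n s (w n s)) \<longlonglongrightarrow> Gt s" if s: "s \<in> {0..1}" for s
  proof (cases "s \<in> {0<..<1}")
    case True
    have "(\<lambda>n. k n s) \<longlonglongrightarrow> min (zs s) (- 0)"
      unfolding k_def by (intro tendsto_intros \<delta>lim)
    then have "(\<lambda>n. k n s) \<longlonglongrightarrow> zs s" using zsneg[OF True] by simp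
    then have l: "(\<lambda>n. min (w n s) (k n s)) \<longlonglongrightarrow> min (\<zeta> s) (zs s)"
      by (intro tendsto_min wlim_in[OF True])
    have nz: "min (\<zeta> s) (zs s) \<noteq> 0" using zsneg[OF True] by linarith
    show ?thesis unfolding F_def Gt_def
      using tendsto_diff[OF tendsto_const[of "g s"] tendsto_divide[OF tendsto_const[of "q s"] l nz]] by simp
  next
    case False
    then have "q s = 0" using s q0 q1 by auto
    then show ?thesis by (simp add: F_def Gt_def)
  qed
  define H where "H s = \<bar>g s\<bar> + (Gs s - (h s - cs))" for s
  have Hi: "H integrable_on {x..1}" if "x \<in> {0..1}" for x
  proof -
    have c1: "continuous_on {x..1} (\<lambda>s. \<bar>g s\<bar>)" using that by (intro continuous_intros continuous_on_subset[OF gc]) auto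
    have c2: "continuous_on {x..1} (\<lambda>s. h s - cs)" using that by (intro continuous_intros continuous_on_subset[OF hc]) auto
    have "Gs integrable_on {x..1}" using Gsi[OF that] by blast
    from integrable_add[OF integrable_continuous_interval[OF c1] integrable_diff[OF this integrable_continuous_interval[OF c2]]]
    show ?thesis unfolding H_def by simp
  qed
  have Fbound: "norm (F n s y) \<le> H s" if s: "s \<in> {0..1}" for n s y
  proof (cases "s \<in> {0<..<1}")
    case True
    have "\<bar>q s / min y (k n s)\<bar> \<le> \<bar>q s / zs s\<bar>"
      using abs_div_le[of "q s" "min y (k n s)" "zs s"] qnn[OF s] zsneg[OF True] by (auto simp: k_def)
    moreover have "\<bar>q s / zs s\<bar> = - (q s / zs s)" using qnn[OF s] zsneg[OF True] by (simp add: divide_nonneg_neg)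
    moreover have "\<bar>g s - q s / min y (k n s)\<bar> \<le> \<bar>g s\<bar> + \<bar>q s / min y (k n s)\<bar>" by (rule abs_triangle_ineq4)
    moreover have "H s = \<bar>g s\<bar> - q s / zs s" by (simp add: H_def Gs_def)
    ultimately show ?thesis unfolding F_def real_norm_def by linarith
  next
    case False
    then have "q s = 0" using s q0 q1 by auto
    then show ?thesis by (simp add: F_def H_def Gs_def)
  qed
  have main: "Gt integrable_on {x..1} \<and> \<zeta> x = - integral {x..1} Gt" if x: "x \<in> {0..1}" for x
  proof -
    have i: "\<And>n. (\<lambda>s. F n s (w n s)) integrable_on {x..1}" using Fi x by auto
    have le: "\<And>n s. s \<in> {x..1} \<Longrightarrow> norm (F n s (w n s)) \<le> H s" using Fbound x by auto
    have cv: "\<And>s. s \<in> {x..1} \<Longrightarrow> (\<lambda>n. F n s (w n s)) \<longlonglongrightarrow> Gt s" using Fconv x by auto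
    note dc = dominated_convergence[OF i Hi[OF x] le cv]
    have "(\<lambda>n. w n x) \<longlonglongrightarrow> - integral {x..1} Gt"
      using tendsto_minus[OF dc(2)] weq[OF x] by simp
    then have "\<zeta> x = - integral {x..1} Gt" by (simp add: \<zeta>_def limI)
    then show ?thesis using dc(1) by blast
  qed
  have Gt01: "Gt integrable_on {0..1}" using main[of 0] by simp
  have zeq: "\<forall>x\<in>{0..1}. \<zeta> x = - integral {x..1} Gt" using main by blast
  have \<zeta>c: "continuous_on {0..1} \<zeta>" and \<zeta>1: "\<zeta> 1 = 0" using sol_of_int[OF Gt01 zeq] by auto
  have Gtc: "continuous_on {0<..<1} Gt"
  proof -
    have nz: "\<forall>s\<in>{0<..<1}. min (\<zeta> s) (zs s) \<noteq> 0" using zsneg by force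
    have "continuous_on {0<..<1} \<zeta>" "continuous_on {0<..<1} zs" "continuous_on {0<..<1} g" "continuous_on {0<..<1} q"
      by (auto intro: continuous_on_subset[OF \<zeta>c] continuous_on_subset[OF zsc] continuous_on_subset[OF gc] continuous_on_subset[OF qc])
    then show ?thesis unfolding Gt_def using nz by (intro continuous_intros) auto
  qed
  have \<zeta>d: "(\<zeta> has_real_derivative Gt x) (at x)" if x: "x \<in> {0<..<1}" for x
  proof (rule sol_of_int(3)[OF Gt01 zeq x])
    show "isCont Gt x" using Gtc x continuous_on_eq_continuous_at[of "{0<..<1}" Gt] by auto
  qed
  have \<zeta>le: "\<forall>x\<in>{0<..<1}. (\<lambda>x. \<zeta> x - zs x) x \<le> 0"
  proof (rule cmp)
    show "continuous_on {0..1} (\<lambda>x. \<zeta> x - zs x)" using \<zeta>c zsc by (intro continuous_intros)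
    show "\<zeta> 1 - zs 1 \<le> 0" by (simp add: \<zeta>1 zs1)
    show "\<forall>x\<in>{0<..<1}. \<exists>d. ((\<lambda>x. \<zeta> x - zs x) has_real_derivative d) (at x) \<and>
              ((\<lambda>x. \<zeta> x - zs x) x > 0 \<longrightarrow> d \<ge> 0)"
    proof
      fix x :: real assume x: "x \<in> {0<..<1}"
      have "\<zeta> x - zs x > 0 \<longrightarrow> Gt x - (h x - cs - q x / zs x) \<ge> 0"
        using c by (auto simp: Gt_def g_def min_def)
      then show "\<exists>d. ((\<lambda>x. \<zeta> x - zs x) has_real_derivative d) (at x) \<and>
              ((\<lambda>x. \<zeta> x - zs x) x > 0 \<longrightarrow> d \<ge> 0)"
        using DERIV_diff[OF \<zeta>d[OF x] zsd[OF x]] by auto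
    qed
  qed
  have \<zeta>neg: "\<zeta> x < 0" if "x \<in> {0<..<1}" for x using \<zeta>le zsneg[OF that] that by force
  have Gteq: "Gt x = h x - c - q x / \<zeta> x" if "x \<in> {0<..<1}" for x
    using \<zeta>le that by (force simp: Gt_def g_def min_def)
  have "is_sol h q c \<zeta>"
    unfolding is_sol_def
  proof (intro conjI ballI)
    show "continuous_on {0..1} \<zeta>" by fact
    show "\<zeta> 1 = 0" by fact
    fix x :: real assume x: "x \<in> {0<..<1}"
    show "(\<zeta> has_real_derivative h x - c - q x / \<zeta> x) (at x)" using \<zeta>d[OF x] Gteq[OF x] by simp
    show "\<zeta> x < 0" by (rule \<zeta>neg[OF x])
  next
    have "continuous_on {0<..<1} (deriv \<zeta>) \<longleftrightarrow> continuous_on {0<..<1} Gt"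
      using \<zeta>d DERIV_imp_deriv by (intro continuous_on_cong) auto
    then show "continuous_on {0<..<1} (deriv \<zeta>)" using Gtc by simp
  qed
  then show ?thesis by blast
qed



lemma left_end:
  fixes D :: "real \<Rightarrow> real"
  assumes D: "continuous_on {0..1} D" and le: "\<forall>x\<in>{0<..<1}. D x \<le> 0"
  shows "D 0 \<le> 0"
proof (rule tendsto_upperbound)
  have "(D \<longlongrightarrow> D 0) (at 0 within {0..1})" using D by (simp add: continuous_on_def)
  then show "(D \<longlongrightarrow> D 0) (at_right 0)" by (simp add: at_within_Icc_at_right)
  show "\<forall>\<^sub>F x in at_right 0. D x \<le> 0"
    unfolding eventually_at_right[of 0 "1::real", simplified] using le by (intro exI[of _ 1]) auto
qed auto

lemma sol_cmp:
  assumes q: "cond_q q" and z1: "is_sol h q c1 z1" and z2: "is_sol h q c2 z2" and c: "c1 \<le> c2"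
  shows "\<forall>x\<in>{0..1}. z1 x \<le> z2 x"
proof -
  have qpos: "\<And>x. x \<in> {0<..<1} \<Longrightarrow> q x > 0" using q by (auto simp: cond_q_def)
  have inner: "\<forall>x\<in>{0<..<1}. (\<lambda>x. z1 x - z2 x) x \<le> 0"
  proof (rule cmp)
    show "continuous_on {0..1} (\<lambda>x. z1 x - z2 x)" using z1 z2 by (intro continuous_intros) (auto simp: is_sol_def)
    show "z1 1 - z2 1 \<le> 0" using z1 z2 by (simp add: is_sol_def)
    show "\<forall>x\<in>{0<..<1}. \<exists>d. ((\<lambda>x. z1 x - z2 x) has_real_derivative d) (at x) \<and>
              ((\<lambda>x. z1 x - z2 x) x > 0 \<longrightarrow> d \<ge> 0)"
    proof
      fix x :: real assume x: "x \<in> {0<..<1}"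
      have d1: "(z1 has_real_derivative h x - c1 - q x / z1 x) (at x)" and n1: "z1 x < 0"
        using z1 x by (auto simp: is_sol_def)
      have d2: "(z2 has_real_derivative h x - c2 - q x / z2 x) (at x)"
        using z2 x by (auto simp: is_sol_def)
      have "z1 x - z2 x > 0 \<longrightarrow> - (q x / z2 x) \<le> - (q x / z1 x)"
        using div_mono_neg[of "q x" "z2 x" "z1 x"] qpos[OF x] n1 by auto
      then have "z1 x - z2 x > 0 \<longrightarrow> (h x - c1 - q x / z1 x) - (h x - c2 - q x / z2 x) \<ge> 0"
        using c by auto
      then show "\<exists>d. ((\<lambda>x. z1 x - z2 x) has_real_derivative d) (at x) \<and>
              ((\<lambda>x. z1 x - z2 x) x > 0 \<longrightarrow> d \<ge> 0)"
        using DERIV_diff[OF d1 d2] by auto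
    qed
  qed
  have "z1 0 - z2 0 \<le> 0"
    using left_end[of "\<lambda>x. z1 x - z2 x"] inner z1 z2 by (auto simp: is_sol_def intro: continuous_intros)
  moreover have "z1 1 - z2 1 \<le> 0" using z1 z2 by (simp add: is_sol_def)
  ultimately show ?thesis using inner by (metis atLeastAtMost_iff greaterThanLessThan_iff diff_le_0_iff_le less_eq_real_def)
qed

lemma sol_unique:
  assumes q: "cond_q q" and z1: "is_sol h q c z1" and z2: "is_sol h q c z2"
  shows "\<forall>x\<in>{0..1}. z1 x = z2 x"
  using sol_cmp[OF q z1 z2] sol_cmp[OF q z2 z1] by force

lemma sol_bounds:
  assumes q: "cond_q q" and z: "is_sol h q c z" and zs: "is_sol h q cs zs" and x: "x \<in> {0..1}"
  shows "\<bar>z x - zs x\<bar> \<le> \<bar>c - cs\<bar>"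
proof -
  have qpos: "\<And>x. x \<in> {0<..<1} \<Longrightarrow> q x > 0" and q0: "q 0 = 0" and q1: "q 1 = 0"
    using q by (auto simp: cond_q_def)
  have zneg: "\<And>x. x \<in> {0<..<1} \<Longrightarrow> z x < 0" and zsneg: "\<And>x. x \<in> {0<..<1} \<Longrightarrow> zs x < 0"
    using z zs by (auto simp: is_sol_def)
  have iz: "((\<lambda>s. h s - c - q s / z s) has_integral - z x) {x..1}" by (rule sol_int[OF z x])
  have izs: "((\<lambda>s. h s - cs - q s / zs s) has_integral - zs x) {x..1}" by (rule sol_int[OF zs x])
  have izs2: "((\<lambda>s. h s - c - q s / zs s) has_integral (- zs x + (cs - c) * (1 - x))) {x..1}"
  proof -
    have "((\<lambda>s. (h s - cs - q s / zs s) + (cs - c)) has_integral (- zs x + (cs - c) * (1 - x))) {x..1}"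
      using has_integral_add[OF izs has_integral_const_real[of "cs - c" x 1]] x by (simp add: mult.commute)
    then show ?thesis by (simp add: algebra_simps)
  qed
  have x1: "1 - x \<le> 1" "0 \<le> 1 - x" using x by auto
  show ?thesis
  proof (cases "c \<le> cs")
    case True
    have ord: "\<forall>y\<in>{0..1}. z y \<le> zs y" by (rule sol_cmp[OF q z zs True])
    have "integral {x..1} (\<lambda>s. h s - c - q s / z s) \<le> integral {x..1} (\<lambda>s. h s - c - q s / zs s)"
    proof (rule integral_le)
      show "(\<lambda>s. h s - c - q s / z s) integrable_on {x..1}" using iz by blast
      show "(\<lambda>s. h s - c - q s / zs s) integrable_on {x..1}" using izs2 by blast
      fix s assume s: "s \<in> {x..1}"
      show "h s - c - q s / z s \<le> h s - c - q s / zs s"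
      proof (cases "s \<in> {0<..<1}")
        case True
        then show ?thesis using div_mono_neg[of "q s" "z s" "zs s"] qpos[OF True] zsneg[OF True] ord by auto
      next
        case False
        then have "s = 0 \<or> s = 1" using s x by auto
        then show ?thesis using q0 q1 by auto
      qed
    qed
    then have "zs x - (cs - c) * (1 - x) \<le> z x" using iz izs2 by (simp add: integral_unique)
    moreover have "z x \<le> zs x" using ord x by auto
    moreover have "(cs - c) * (1 - x) \<le> (cs - c)" using True x1 by (simp add: mult_left_le)
    ultimately show ?thesis using True by auto
  next
    case False
    have ord: "\<forall>y\<in>{0..1}. zs y \<le> z y" using sol_cmp[OF q zs z] False by auto
    have "integral {x..1} (\<lambda>s. h s - c - q s / zs s) \<le> integral {x..1} (\<lambda>s. h s - c - q s / z s)"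
    proof (rule integral_le)
      show "(\<lambda>s. h s - c - q s / z s) integrable_on {x..1}" using iz by blast
      show "(\<lambda>s. h s - c - q s / zs s) integrable_on {x..1}" using izs2 by blast
      fix s assume s: "s \<in> {x..1}"
      show "h s - c - q s / zs s \<le> h s - c - q s / z s"
      proof (cases "s \<in> {0<..<1}")
        case True
        then show ?thesis using div_mono_neg[of "q s" "zs s" "z s"] qpos[OF True] zneg[OF True] ord by auto
      next
        case False
        then have "s = 0 \<or> s = 1" using s x by auto
        then show ?thesis using q0 q1 by auto
      qed
    qed
    then have "z x \<le> zs x - (cs - c) * (1 - x)" using iz izs2 by (simp add: integral_unique)
    moreover have "zs x \<le> z x" using ord x by auto
    moreover have "(c - cs) * (1 - x) \<le> (c - cs)" using False x1 by (simp add: mult_left_le)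
    ultimately show ?thesis using False by (auto simp: algebra_simps)
  qed
qed


theorem lemma6p1:
  fixes f h q :: "real \<Rightarrow> real" and cstar :: real and zstar :: "real \<Rightarrow> real"
  assumes f_C1: "\<forall>x\<in>{0..1}. (f has_real_derivative h x) (at x within {0..1})"
      and h_cont: "continuous_on {0..1} h"
      and f0: "f 0 = 0"
      and q: "cond_q q"
      and cstar: "\<forall>c. (\<exists>z. is_sol0 h q c z) \<longleftrightarrow> c \<ge> cstar"
      and zstar: "is_sol0 h q cstar zstar"
  shows "\<exists>Z :: real \<Rightarrow> real \<Rightarrow> real.
           (\<forall>c. is_sol h q c (Z c) \<and> (\<forall>z. is_sol h q c z \<longrightarrow> (\<forall>x\<in>{0..1}. z x = Z c x)))
         \<and> (\<forall>c. c \<ge> cstar \<longrightarrow> Z c 0 = 0)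
         \<and> (\<forall>c. c < cstar \<longrightarrow> Z c 0 < 0)
         \<and> (\<forall>c1 c2. c2 > c1 \<longrightarrow> (\<forall>x\<in>{0<..<1}. Z c2 x > Z c1 x))
         \<and> (\<forall>x\<in>{0..1}. ((\<lambda>c. Z c x) \<longlongrightarrow> zstar x) (at cstar))"
proof -
  have zs: "is_sol h q cstar zstar" using zstar by (simp add: is_sol0_def)
  have ex: "\<exists>z. is_sol h q c z" for c
  proof (cases "c \<ge> cstar")
    case True
    then obtain z where "is_sol0 h q c z" using cstar[rule_format, of c] by blast
    then show ?thesis by (auto simp: is_sol0_def)
  next
    case False
    then show ?thesis using exist_below[OF h_cont q zs] by auto
  qed
  define Z where "Z c = (SOME z. is_sol h q c z)" for c
  have ZS: "is_sol h q c (Z c)" for c unfolding Z_def using ex[of c] by (rule someI_ex)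
  have uniq: "\<forall>z. is_sol h q c z \<longrightarrow> (\<forall>x\<in>{0..1}. z x = Z c x)" for c
  proof (intro allI impI)
    fix z assume "is_sol h q c z"
    then show "\<forall>x\<in>{0..1}. z x = Z c x" by (rule sol_unique[OF q _ ZS[of c]])
  qed
  have P2: "Z c 0 = 0" if cc: "c \<ge> cstar" for c
  proof -
    obtain z where "is_sol0 h q c z" using cstar[rule_format, of c] cc by blast
    then show ?thesis using uniq[of c] by (auto simp: is_sol0_def)
  qed
  have P3: "Z c 0 < 0" if c: "c < cstar" for c
  proof -
    have zc: "continuous_on {0..1} (Z c)" using ZS[of c] unfolding is_sol_def by blast
    have "\<forall>x\<in>{0<..<1}. Z c x \<le> 0" using ZS[of c] unfolding is_sol_def by (meson less_imp_le)
    then have "Z c 0 \<le> 0" by (rule left_end[OF zc])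
    moreover have "Z c 0 \<noteq> 0"
    proof
      assume "Z c 0 = 0"
      then have "is_sol0 h q c (Z c)" using ZS by (simp add: is_sol0_def)
      then have "c \<ge> cstar" using cstar[rule_format, of c] by blast
      then show False using c by linarith
    qed
    ultimately show ?thesis by simp
  qed
  have qpos: "\<And>x. x \<in> {0<..<1} \<Longrightarrow> q x > 0" using q by (auto simp: cond_q_def)
  have P4: "Z c2 x > Z c1 x" if c: "c2 > c1" and x: "x \<in> {0<..<1}" for c1 c2 x
  proof (rule ccontr)
    assume "\<not> Z c2 x > Z c1 x"
    moreover have "Z c1 x \<le> Z c2 x" using sol_cmp[OF q ZS ZS, of c1 c2] c x by auto
    ultimately have eq: "Z c1 x = Z c2 x" by simp
    have d1: "(Z c1 has_real_derivative h x - c1 - q x / Z c1 x) (at x)"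
      using ZS[of c1] x by (auto simp: is_sol_def)
    have d2: "(Z c2 has_real_derivative h x - c2 - q x / Z c2 x) (at x)"
      using ZS[of c2] x by (auto simp: is_sol_def)
    have dd: "((\<lambda>y. Z c1 y - Z c2 y) has_real_derivative c2 - c1) (at x)"
      using DERIV_diff[OF d1 d2] eq by simp
    have "\<exists>d>0. \<forall>hh>0. hh < d \<longrightarrow> Z c1 x - Z c2 x < Z c1 (x + hh) - Z c2 (x + hh)"
      using DERIV_pos_inc_right[OF dd] c by simp
    then obtain d where d: "d > 0" "\<And>hh. hh > 0 \<Longrightarrow> hh < d \<Longrightarrow> Z c1 x - Z c2 x < Z c1 (x + hh) - Z c2 (x + hh)"
      by blast
    define M where "M = min d (1 - x)"
    have m: "0 < M" "M \<le> 1 - x" "M \<le> d" using d(1) x unfolding M_def by auto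
    define hh where "hh = M / 2"
    have x': "0 < x" "x < 1" using x by auto
    have hh: "hh > 0" "hh < d" "x + hh \<in> {0<..<1}" using m x' unfolding hh_def by auto
    have "Z c1 (x + hh) \<le> Z c2 (x + hh)" using sol_cmp[OF q ZS ZS, of c1 c2] c hh(3) by auto
    then show False using d(2)[OF hh(1,2)] eq by simp
  qed
  have P5: "((\<lambda>c. Z c x) \<longlongrightarrow> zstar x) (at cstar)" if x: "x \<in> {0..1}" for x
  proof -
    have "((\<lambda>c. Z c x - zstar x) \<longlongrightarrow> 0) (at cstar)"
    proof (rule Lim_null_comparison)
      show "\<forall>\<^sub>F c in at cstar. norm (Z c x - zstar x) \<le> \<bar>c - cstar\<bar>"
        using sol_bounds[OF q ZS zs x] by (intro always_eventually allI) simp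
      have "((\<lambda>c. \<bar>c - cstar\<bar>) \<longlongrightarrow> \<bar>cstar - cstar\<bar>) (at cstar)" by (intro tendsto_intros)
      then show "((\<lambda>c. \<bar>c - cstar\<bar>) \<longlongrightarrow> 0) (at cstar)" by simp
    qed
    from tendsto_add[OF this tendsto_const[of "zstar x"]] show ?thesis by simp
  qed
  have A: "\<forall>c. is_sol h q c (Z c) \<and> (\<forall>z. is_sol h q c z \<longrightarrow> (\<forall>x\<in>{0..1}. z x = Z c x))"
    using ZS uniq by blast
  have B: "\<forall>c. c \<ge> cstar \<longrightarrow> Z c 0 = 0" using P2 by blast
  have C: "\<forall>c. c < cstar \<longrightarrow> Z c 0 < 0" using P3 by blast
  have D: "\<forall>c1 c2. c2 > c1 \<longrightarrow> (\<forall>x\<in>{0<..<1}. Z c2 x > Z c1 x)" using P4 by blast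
  have E: "\<forall>x\<in>{0..1}. ((\<lambda>c. Z c x) \<longlongrightarrow> zstar x) (at cstar)" using P5 by blast
  show ?thesis by (rule exI[of _ Z]) (rule conjI[OF A conjI[OF B conjI[OF C conjI[OF D E]]]])
qed

end
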